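(* Let $A,B\in\mathrm{SL}_2\mathbb{Z}$ be noncommuting, well oriented, with $2\le\mathrm{tr}(A)<\mathrm{tr}(B)$ and $\mathrm{tr}(AB)>\mathrm{tr}(B^2)$, and assume $[(ab)^3]\le[(ab^2)^2]-2$. Fix a word $w$ and let $k,h\ge0$ be such that the length of $ab^2wab(ab^2)^kab(ab^2)^hab$ is a multiple of $6$. If $w$ is empty, or is a product of copies of $ab$ and $ab^2$, then $[ab^2wab(ab^2)^kab(ab^2)^hab]<[ab^2w(ab^2)^{k+h+2}]$.
   Context: Words are finite strings over $\{a,b\}$; $\phi$ is the monoid homomorphism with $\phi(a)=A,\phi(b)=B$, and $[w]=\mathrm{tr}(\phi(w))$. Fixed points are for the Möbius action on $\partial\mathcal{H}=\mathbb{P}^1\mathbb{R}$; $\alpha^\pm$ ($\beta^\pm$) are the attracting/repelling fixed points of $A$ ($B$), both equal to the unique fixed point if parabolic. With $\partial\mathcal{H}$ cyclically ordered and $[\alpha,\beta]$ the closed counterclockwise interval from $\alpha$ to $\beta$, let $I^+=\{\alpha^+\}$ if $\alpha^+=\beta^+$, and otherwise the one of $[\alpha^+,\beta^+],[\beta^+,\alpha^+]$ mapped into itself by both $A$ and $B$ (if it exists); define $I^-$ likewise with $A^{-1},B^{-1},\alpha^-,\beta^-$. The pair is coherently oriented if both exist, and well oriented if $A,B$ is coherently oriented but $A,B^{-1}$ is not. *)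

theory Defs
  imports "HOL-Analysis.Analysis"
begin

type_synonym mat2 = "int^2^2"

definition SL2Z :: "mat2 set" where
  "SL2Z = {M. det M = 1}"

definition sl2_inv :: "mat2 \<Rightarrow> mat2" where
  "sl2_inv M = (\<chi> i j. if i = 1 \<and> j = 1 then M$2$2
                        else if i = 1 \<and> j = 2 then - M$1$2
                        else if i = 2 \<and> j = 1 then - M$2$1
                        else M$1$1)"

(* points of the boundary RP^1 = R \<union> {\<infinity>}: Some x = x, None = \<infinity> *)
type_synonym p1 = "real option"

definition moeb :: "mat2 \<Rightarrow> p1 \<Rightarrow> p1" where
  "moeb M p = (let a = real_of_int (M$1$1); b = real_of_int (M$1$2);
                   c = real_of_int (M$2$1); d = real_of_int (M$2$2) in
     (case p of
        Some z \<Rightarrow> (if c * z + d \<noteq> 0 then Some ((a * z + b) / (c * z + d)) else None)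
      | None \<Rightarrow> (if c \<noteq> 0 then Some (a / c) else None)))"

definition is_fix :: "mat2 \<Rightarrow> p1 \<Rightarrow> bool" where
  "is_fix M p \<longleftrightarrow> moeb M p = p"

(* eigenvalue of M on the line representing the fixed point p:
   at z = [z:1] it is c z + d, at \<infinity> = [1:0] it is a.
   The derivative of the Moebius map at p is 1/(mult)^2, so p is attracting
   iff |mult| > 1 and repelling iff |mult| < 1; at a parabolic fixed point |mult| = 1. *)
definition mult :: "mat2 \<Rightarrow> p1 \<Rightarrow> real" where
  "mult M p = (case p of Some z \<Rightarrow> real_of_int (M$2$1) * z + real_of_int (M$2$2)
                        | None \<Rightarrow> real_of_int (M$1$1))"

definition attr :: "mat2 \<Rightarrow> p1" where
  "attr M = (THE p. is_fix M p \<and> \<bar>mult M p\<bar> \<ge> 1)"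

definition repl :: "mat2 \<Rightarrow> p1" where
  "repl M = (THE p. is_fix M p \<and> \<bar>mult M p\<bar> \<le> 1)"

(* closed cyclic interval from x to y in the cyclic order of R \<union> {\<infinity>}
   (increasing along R, then \<infinity>, then back to -\<infinity>) *)
definition cint :: "p1 \<Rightarrow> p1 \<Rightarrow> p1 set" where
  "cint x y = (case (x, y) of
      (Some u, Some v) \<Rightarrow> (if u \<le> v then {Some z | z. u \<le> z \<and> z \<le> v}
                           else {Some z | z. u \<le> z} \<union> {None} \<union> {Some z | z. z \<le> v})
    | (Some u, None) \<Rightarrow> {Some z | z. u \<le> z} \<union> {None}
    | (None, Some v) \<Rightarrow> {None} \<union> {Some z | z. z \<le> v}
    | (None, None) \<Rightarrow> {None})"

definition invariant_int :: "mat2 \<Rightarrow> mat2 \<Rightarrow> p1 set \<Rightarrow> bool" where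
  "invariant_int A B I \<longleftrightarrow> moeb A ` I \<subseteq> I \<and> moeb B ` I \<subseteq> I"

definition Iplus_exists :: "mat2 \<Rightarrow> mat2 \<Rightarrow> bool" where
  "Iplus_exists A B \<longleftrightarrow> attr A = attr B \<or>
     invariant_int A B (cint (attr A) (attr B)) \<or> invariant_int A B (cint (attr B) (attr A))"

definition Iminus_exists :: "mat2 \<Rightarrow> mat2 \<Rightarrow> bool" where
  "Iminus_exists A B \<longleftrightarrow> repl A = repl B \<or>
     invariant_int (sl2_inv A) (sl2_inv B) (cint (repl A) (repl B)) \<or>
     invariant_int (sl2_inv A) (sl2_inv B) (cint (repl B) (repl A))"

definition coherently_oriented :: "mat2 \<Rightarrow> mat2 \<Rightarrow> bool" where
  "coherently_oriented A B \<longleftrightarrow> Iplus_exists A B \<and> Iminus_exists A B"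

definition well_oriented :: "mat2 \<Rightarrow> mat2 \<Rightarrow> bool" where
  "well_oriented A B \<longleftrightarrow> coherently_oriented A B \<and> \<not> coherently_oriented A (sl2_inv B)"

datatype letter = La | Lb

fun phi :: "mat2 \<Rightarrow> mat2 \<Rightarrow> letter list \<Rightarrow> mat2" where
  "phi A B [] = mat 1"
| "phi A B (l # w) = (case l of La \<Rightarrow> A | Lb \<Rightarrow> B) ** phi A B w"

definition trw :: "mat2 \<Rightarrow> mat2 \<Rightarrow> letter list \<Rightarrow> int" where
  "trw A B w = trace (phi A B w)"

definition wpow :: "letter list \<Rightarrow> nat \<Rightarrow> letter list" where
  "wpow u n = concat (replicate n u)"

end

theory Submission
  imports Defs
begin

definition m22 :: "'a \<Rightarrow> 'a \<Rightarrow> 'a \<Rightarrow> 'a \<Rightarrow> 'a^2^2" where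
  "m22 a b c d = (\<chi> i j. if i = 1 then (if j = 1 then a else b) else (if j = 1 then c else d))"

lemma m22_nth [simp]:
  "m22 a b c d $ 1 $ 1 = a" "m22 a b c d $ 1 $ 2 = b" "m22 a b c d $ 2 $ 1 = c" "m22 a b c d $ 2 $ 2 = d"
  by (simp_all add: m22_def)

lemma m22_eta: "M = m22 (M$1$1) (M$1$2) (M$2$1) (M$2$2)"
  by (simp add: m22_def vec_eq_iff forall_2)

lemma m22_eq_iff: "m22 a b c d = m22 a' b' c' d' \<longleftrightarrow> a = a' \<and> b = b' \<and> c = c' \<and> d = d'"
  by (auto simp: vec_eq_iff forall_2 m22_def)

lemma m22_mult: "(m22 a b c d :: 'a::semiring_1^2^2) ** m22 a' b' c' d' =
   m22 (a*a' + b*c') (a*b' + b*d') (c*a' + d*c') (c*b' + d*d')"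
  by (simp add: m22_eq_iff[symmetric] matrix_matrix_mult_def sum_2 m22_def[of "a*a' + b*c'"] vec_eq_iff forall_2)

lemma m22_one: "(mat 1 :: 'a::zero_neq_one^2^2) = m22 1 0 0 1"
  by (simp add: mat_def m22_def vec_eq_iff forall_2)

lemma m22_diff: "(m22 a b c d :: 'a::ab_group_add^2^2) - m22 a' b' c' d' = m22 (a-a') (b-b') (c-c') (d-d')"
  by (simp add: m22_def vec_eq_iff forall_2)

lemma trace_m22: "trace (m22 a b c d :: 'a::semiring_1^2^2) = a + d"
  by (simp add: trace_def sum_2)

lemma det_m22: "det (m22 a b c d :: 'a::comm_ring_1^2^2) = a*d - b*c"
  by (simp add: det_2)

fun phig :: "'a::semiring_1^2^2 \<Rightarrow> 'a^2^2 \<Rightarrow> letter list \<Rightarrow> 'a^2^2" where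
  "phig A B [] = mat 1"
| "phig A B (l # w) = (case l of La \<Rightarrow> A | Lb \<Rightarrow> B) ** phig A B w"

lemma phi_phig: "phi A B w = phig A B w"
  by (induction w) auto

lemma phig_append: "phig A B (u @ v) = phig A B u ** phig A B v"
  by (induction u) (auto simp: matrix_mul_assoc)

fun cf :: "'a::comm_ring_1 \<Rightarrow> 'a \<Rightarrow> 'a \<Rightarrow> letter list \<Rightarrow> 'a \<times> 'a \<times> 'a \<times> 'a" where
  "cf x y z [] = (1,0,0,0)"
| "cf x y z (l # w) = (case cf x y z w of (c0,c1,c2,c3) \<Rightarrow>
     (case l of La \<Rightarrow> (-c1, c0 + x*c1, -c3, c2 + x*c3)
      | Lb \<Rightarrow> (c1*(z - x*y) - c2 - c3*x, c1*y + c3, c0 + c1*x + c2*y + c3*z, -c1)))"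

definition lc :: "'a::comm_ring_1 \<times> 'a \<times> 'a \<times> 'a \<Rightarrow> 'a^2^2 \<Rightarrow> 'a^2^2 \<Rightarrow> 'a^2^2" where
  "lc c A B = (case c of (c0,c1,c2,c3) \<Rightarrow> (\<chi> i j. c0 * (mat 1 :: 'a^2^2)$i$j + c1*A$i$j + c2*B$i$j + c3*(A**B)$i$j))"

lemma lc_m22: "lc (c0,c1,c2,c3) (m22 a1 a2 a3 a4) (m22 b1 b2 b3 b4) =
  m22 (c0 + c1*a1 + c2*b1 + c3*(a1*b1+a2*b3)) (c1*a2 + c2*b2 + c3*(a1*b2+a2*b4))
      (c1*a3 + c2*b3 + c3*(a3*b1+a4*b3)) (c0 + c1*a4 + c2*b4 + c3*(a3*b2+a4*b4))"
  by (simp add: lc_def m22_mult m22_one) (simp add: m22_def vec_eq_iff forall_2)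

lemma phig_lc_m22:
  fixes a1 a2 a3 a4 b1 b2 b3 b4 :: "'a::idom"
  assumes dA: "a1*a4 - a2*a3 = 1" and dB: "b1*b4 - b2*b3 = 1"
  shows "phig (m22 a1 a2 a3 a4) (m22 b1 b2 b3 b4) w =
     lc (cf (a1+a4) (b1+b4) (a1*b1+a2*b3+(a3*b2+a4*b4)) w) (m22 a1 a2 a3 a4) (m22 b1 b2 b3 b4)"
proof (induction w)
  case Nil
  then show ?case by (simp add: lc_m22 m22_one)
next
  case (Cons l w)
  obtain c0 c1 c2 c3 where c: "cf (a1+a4) (b1+b4) (a1*b1+a2*b3+(a3*b2+a4*b4)) w = (c0,c1,c2,c3)"
    by (metis prod_cases4)
  show ?case
  proof (cases l)
    case La
    show ?thesis
      apply (simp add: Cons.IH La c lc_m22 m22_mult m22_eq_iff)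
      apply (intro conjI)
      using dA dB by algebra+
  next
    case Lb
    show ?thesis
      apply (simp add: Cons.IH Lb c lc_m22 m22_mult m22_eq_iff)
      apply (intro conjI)
      using dA dB by algebra+
  qed
qed

lemma phig_lc:
  fixes A B :: "'a::idom^2^2"
  assumes "det A = 1" "det B = 1"
  shows "phig A B w = lc (cf (trace A) (trace B) (trace (A**B)) w) A B"
proof -
  obtain a1 a2 a3 a4 where A: "A = m22 a1 a2 a3 a4" using m22_eta by blast
  obtain b1 b2 b3 b4 where B: "B = m22 b1 b2 b3 b4" using m22_eta by blast
  have dA: "a1*a4 - a2*a3 = 1" and dB: "b1*b4 - b2*b3 = 1" using assms by (simp_all add: A B det_m22)
  show ?thesis unfolding A B m22_mult trace_m22 using phig_lc_m22[OF dA dB] by simp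
qed

definition trp :: "'a::comm_ring_1 \<Rightarrow> 'a \<Rightarrow> 'a \<Rightarrow> letter list \<Rightarrow> 'a" where
  "trp x y z w = (case cf x y z w of (c0,c1,c2,c3) \<Rightarrow> 2*c0 + x*c1 + y*c2 + z*c3)"

lemma trace_phig:
  fixes A B :: "'a::idom^2^2"
  assumes "det A = 1" "det B = 1"
  shows "trace (phig A B w) = trp (trace A) (trace B) (trace (A**B)) w"
proof -
  obtain a1 a2 a3 a4 where A: "A = m22 a1 a2 a3 a4" using m22_eta by blast
  obtain b1 b2 b3 b4 where B: "B = m22 b1 b2 b3 b4" using m22_eta by blast
  obtain c0 c1 c2 c3 where c: "cf (trace A) (trace B) (trace (A**B)) w = (c0,c1,c2,c3)"
    by (metis prod_cases4)
  show ?thesis unfolding phig_lc[OF assms] c trp_def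
    by (simp add: A B lc_m22 trace_m22 m22_mult algebra_simps)
qed

lemma cf_of_int: "cf (of_int x) (of_int y) (of_int z) w =
   (case cf x y z w of (c0,c1,c2,c3) \<Rightarrow> (of_int c0, of_int c1, of_int c2, of_int c3))"
  by (induction w) (auto split: prod.splits letter.splits)

lemma trp_of_int: "trp (of_int x) (of_int y) (of_int z) w = of_int (trp x y z w)"
  by (simp add: trp_def cf_of_int split: prod.splits)

lemma int_facts:
  fixes x y z :: int
  assumes x2: "2 \<le> x" and xy: "x < y" and zl: "y^2 - 2 < z" and cub: "z^3 - 3*z \<le> (y*z - x)^2 - 4"
  shows "z = y^2 - 1 \<and> 2*x \<le> y"
proof -
  have y3: "3 \<le> y" using x2 xy by simp
  have zle: "z \<le> y^2 - 1"
  proof (rule ccontr)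
    assume "\<not> z \<le> y^2 - 1"
    hence zg: "y^2 \<le> z" by simp
    have z9: "9 \<le> z" using zg y3 power_mono[of 3 y 2] by simp
    have "z^2 * y^2 \<le> z^2 * z" using zg by (simp add: mult_left_mono)
    hence a: "y^2*z^2 \<le> z^3" by (simp add: power2_eq_square power3_eq_cube algebra_simps)
    have xx: "x^2 \<le> z" using xy x2 zg power_strict_mono[of x y 2] by simp
    have "2*3 \<le> x*y" using x2 y3 mult_mono[of 2 x 3 y] by simp
    hence "6*z \<le> x*y*z" using z9 mult_right_mono[of 6 "x*y" z] by simp
    hence "2*(x*y*z) - 3*z - x^2 + 4 > 0" using xx z9 by linarith
    moreover have "(y*z - x)^2 - 4 - (z^3 - 3*z) = y^2*z^2 - z^3 - (2*(x*y*z) - 3*z - x^2 + 4)"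
      by (simp add: power2_eq_square power3_eq_cube algebra_simps)
    ultimately show False using cub a by linarith
  qed
  hence zeq: "z = y^2 - 1" using zl by simp
  have key: "(y^2 - 1)*(y^2 + 2 - 2*x*y) + x^2 - 4 \<ge> 0"
  proof -
    have "(y*z - x)^2 - 4 - (z^3 - 3*z) = (y^2 - 1)*(y^2 + 2 - 2*x*y) + x^2 - 4"
      unfolding zeq by (simp add: power2_eq_square power3_eq_cube algebra_simps)
    thus ?thesis using cub by linarith
  qed
  have b: "2*x*y \<le> y^2 + 2"
  proof (rule ccontr)
    assume "\<not> 2*x*y \<le> y^2 + 2"
    hence "y^2 + 2 - 2*x*y \<le> -1" by simp
    moreover have "y^2 - 1 \<ge> 0" using y3 by (simp add: power2_eq_square)
    ultimately have "(y^2 - 1)*(y^2 + 2 - 2*x*y) \<le> (y^2 - 1) * (-1)"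
      using mult_left_mono by blast
    hence "(y^2 - 1)*(y^2 + 2 - 2*x*y) \<le> 1 - y^2" by simp
    moreover have "x^2 < y^2" using xy x2 power_strict_mono[of x y 2] by simp
    ultimately show False using key by linarith
  qed
  have "2*x \<le> y"
  proof (rule ccontr)
    assume "\<not> 2*x \<le> y"
    hence "y + 1 \<le> 2*x" by simp
    hence "(y+1)*y \<le> 2*x*y" using y3 by (simp add: mult_right_mono)
    thus False using b y3 by (simp add: power2_eq_square algebra_simps)
  qed
  thus ?thesis using zeq by simp
qed

definition qe :: "real \<Rightarrow> real \<Rightarrow> real \<Rightarrow> real" where "qe u a b = a + b*u"

lemma qe_mult: "u*u = y*u - 1 \<Longrightarrow> qe u a b * qe u c g = qe u (a*c - b*g) (a*g + b*c + y*b*g)"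
  unfolding qe_def by (simp add: algebra_simps) algebra

lemma qe_add: "qe u a b + qe u c g = qe u (a+c) (b+g)"
  unfolding qe_def by (simp add: algebra_simps)

lemma qe_diff: "qe u a b - qe u c g = qe u (a-c) (b-g)"
  unfolding qe_def by (simp add: algebra_simps)

lemma qe_cong: "a = a' \<Longrightarrow> b = b' \<Longrightarrow> qe u a b = qe u a' b'" by simp

lemma m22_add: "(m22 a b c d :: 'a::ab_group_add^2^2) + m22 a' b' c' d' = m22 (a+a') (b+b') (c+c') (d+d')"
  by (simp add: m22_def vec_eq_iff forall_2)

definition Am :: "real \<Rightarrow> real^2^2" where "Am e = m22 (1+e) 1 e 1"
definition Bm :: "real \<Rightarrow> real \<Rightarrow> real \<Rightarrow> real^2^2" where
  "Bm e d u = m22 ((4+2*e+d) - u) 0 (((4+2*e+d)^2 - 1 - (1+e)*(4+2*e+d)) + e*u) u"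

fun ev1 :: "int list \<Rightarrow> real \<Rightarrow> real" where
  "ev1 [] x = 0"
| "ev1 (c # cs) x = of_int c + x * ev1 cs x"

fun add1 :: "int list \<Rightarrow> int list \<Rightarrow> int list" where
  "add1 [] q = q"
| "add1 p [] = p"
| "add1 (a # p) (b # q) = (a + b) # add1 p q"

fun mul1 :: "int list \<Rightarrow> int list \<Rightarrow> int list" where
  "mul1 [] q = []"
| "mul1 (a # p) q = add1 (map ((*) a) q) (0 # mul1 p q)"

lemma ev1_add1: "ev1 (add1 p q) x = ev1 p x + ev1 q x"
  by (induction p q rule: add1.induct) (auto simp: algebra_simps)

lemma ev1_smul: "ev1 (map ((*) a) q) x = of_int a * ev1 q x"
  by (induction q) (auto simp: algebra_simps)

lemma ev1_mul1: "ev1 (mul1 p q) x = ev1 p x * ev1 q x"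
  by (induction p) (auto simp: ev1_add1 ev1_smul algebra_simps)

lemma ev1_neg: "ev1 (map uminus p) x = - ev1 p x"
  by (induction p) auto

fun ev2 :: "int list list \<Rightarrow> real \<Rightarrow> real \<Rightarrow> real" where
  "ev2 [] e d = 0"
| "ev2 (r # rs) e d = ev1 r d + e * ev2 rs e d"

fun add2 :: "int list list \<Rightarrow> int list list \<Rightarrow> int list list" where
  "add2 [] q = q"
| "add2 p [] = p"
| "add2 (a # p) (b # q) = add1 a b # add2 p q"

fun mul2 :: "int list list \<Rightarrow> int list list \<Rightarrow> int list list" where
  "mul2 [] q = []"
| "mul2 (r # p) q = add2 (map (mul1 r) q) ([] # mul2 p q)"

definition neg2 :: "int list list \<Rightarrow> int list list" where
  "neg2 p = map (map uminus) p"

lemma ev2_add2: "ev2 (add2 p q) e d = ev2 p e d + ev2 q e d"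
  by (induction p q rule: add2.induct) (auto simp: ev1_add1 algebra_simps)

lemma ev2_rmul: "ev2 (map (mul1 r) q) e d = ev1 r d * ev2 q e d"
  by (induction q) (auto simp: ev1_mul1 algebra_simps)

lemma ev2_mul2: "ev2 (mul2 p q) e d = ev2 p e d * ev2 q e d"
  by (induction p) (auto simp: ev2_add2 ev2_rmul algebra_simps)

lemma ev2_neg2: "ev2 (neg2 p) e d = - ev2 p e d"
  unfolding neg2_def by (induction p) (auto simp: ev1_neg algebra_simps)

definition sub2 :: "int list list \<Rightarrow> int list list \<Rightarrow> int list list" where
  "sub2 p q = add2 p (neg2 q)"

lemma ev2_sub2: "ev2 (sub2 p q) e d = ev2 p e d - ev2 q e d"
  by (simp add: sub2_def ev2_add2 ev2_neg2)

definition Ypol :: "int list list" where "Ypol = [[4,1],[2]]"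

lemma ev2_Ypol: "ev2 Ypol e d = 4 + 2*e + d"
  by (simp add: Ypol_def algebra_simps)

type_synonym sq = "int list list \<times> int list list"

fun evq :: "sq \<Rightarrow> real \<Rightarrow> real \<Rightarrow> real \<Rightarrow> real" where
  "evq (a, b) e d u = ev2 a e d + ev2 b e d * u"

fun qm :: "sq \<Rightarrow> sq \<Rightarrow> sq" where
  "qm (a, b) (c, g) = (let bg = mul2 b g in
     (sub2 (mul2 a c) bg, add2 (add2 (mul2 a g) (mul2 b c)) (mul2 Ypol bg)))"

fun qa :: "sq \<Rightarrow> sq \<Rightarrow> sq" where
  "qa (a, b) (c, g) = (add2 a c, add2 b g)"

fun qs :: "sq \<Rightarrow> sq \<Rightarrow> sq" where
  "qs (a, b) (c, g) = (sub2 a c, sub2 b g)"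

lemma evq_qm:
  assumes rel: "u*u = (4+2*e+d)*u - 1"
  shows "evq (qm p q) e d u = evq p e d u * evq q e d u"
proof -
  obtain a b where p: "p = (a,b)" by fastforce
  obtain c g where q: "q = (c,g)" by fastforce
  have "u*u*(ev2 b e d * ev2 g e d) = ((4+2*e+d)*u - 1)*(ev2 b e d * ev2 g e d)" using rel by simp
  then show ?thesis
    by (simp add: p q Let_def ev2_sub2 ev2_add2 ev2_mul2 ev2_Ypol algebra_simps)
qed

lemma evq_qa: "evq (qa p q) e d u = evq p e d u + evq q e d u"
  by (cases p; cases q) (simp add: ev2_add2 algebra_simps)

lemma evq_qs: "evq (qs p q) e d u = evq p e d u - evq q e d u"
  by (cases p; cases q) (simp add: ev2_sub2 algebra_simps)

type_synonym sm = "sq \<times> sq \<times> sq \<times> sq"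

fun evm :: "sm \<Rightarrow> real \<Rightarrow> real \<Rightarrow> real \<Rightarrow> real^2^2" where
  "evm (a, b, c, g) e d u = m22 (evq a e d u) (evq b e d u) (evq c e d u) (evq g e d u)"

fun smm :: "sm \<Rightarrow> sm \<Rightarrow> sm" where
  "smm (a, b, c, g) (a', b', c', g') = (qa (qm a a') (qm b c'), qa (qm a b') (qm b g'), qa (qm c a') (qm g c'), qa (qm c b') (qm g g'))"

fun sms :: "sm \<Rightarrow> sm \<Rightarrow> sm" where
  "sms (a, b, c, g) (a', b', c', g') = (qs a a', qs b b', qs c c', qs g g')"

fun sma :: "sm \<Rightarrow> sm \<Rightarrow> sm" where
  "sma (a, b, c, g) (a', b', c', g') = (qa a a', qa b b', qa c c', qa g g')"

lemma evm_smm: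
  assumes rel: "u*u = (4+2*e+d)*u - 1"
  shows "evm (smm S T) e d u = evm S e d u ** evm T e d u"
proof -
  obtain a b c g where S: "S = (a,b,c,g)" by (metis prod_cases4)
  obtain a' b' c' g' where T: "T = (a',b',c',g')" by (metis prod_cases4)
  show ?thesis by (simp add: S T m22_mult evq_qa evq_qm[OF rel] del: qm.simps qa.simps evq.simps)
qed

lemma evm_sms: "evm (sms S T) e d u = evm S e d u - evm T e d u"
proof -
  obtain a b c g where S: "S = (a,b,c,g)" by (metis prod_cases4)
  obtain a' b' c' g' where T: "T = (a',b',c',g')" by (metis prod_cases4)
  show ?thesis by (simp add: S T m22_diff evq_qs del: qs.simps evq.simps)
qed

lemma evm_sma: "evm (sma S T) e d u = evm S e d u + evm T e d u"
proof -
  obtain a b c g where S: "S = (a,b,c,g)" by (metis prod_cases4)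
  obtain a' b' c' g' where T: "T = (a',b',c',g')" by (metis prod_cases4)
  show ?thesis by (simp add: S T m22_add evq_qa del: qa.simps evq.simps)
qed

definition nn2 :: "int list list \<Rightarrow> bool" where
  "nn2 p = list_all (list_all (\<lambda>c. 0 \<le> c)) p"

lemma ev1_nonneg: "list_all (\<lambda>c. 0 \<le> c) p \<Longrightarrow> 0 \<le> x \<Longrightarrow> 0 \<le> ev1 p x"
  by (induction p) auto

lemma ev2_nonneg: "nn2 p \<Longrightarrow> 0 \<le> e \<Longrightarrow> 0 \<le> d \<Longrightarrow> 0 \<le> ev2 p e d"
  unfolding nn2_def by (induction p) (auto intro!: add_nonneg_nonneg ev1_nonneg)

definition pos2 :: "int list list \<Rightarrow> bool" where
  "pos2 p = (nn2 p \<and> (case p of ((c # _) # _) \<Rightarrow> 0 < c | _ \<Rightarrow> False))"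

lemma ev2_pos: "pos2 p \<Longrightarrow> 0 \<le> e \<Longrightarrow> 0 \<le> d \<Longrightarrow> 0 < ev2 p e d"
proof -
  assume h: "pos2 p" "0 \<le> e" "0 \<le> d"
  then obtain c r rs where p: "p = (c # r) # rs" and c: "0 < c"
    unfolding pos2_def by (auto split: list.splits)
  have "0 \<le> ev1 r d" using h(1,3) p by (intro ev1_nonneg) (auto simp: pos2_def nn2_def)
  moreover have "0 \<le> ev2 rs e d" using h p by (intro ev2_nonneg) (auto simp: pos2_def nn2_def)
  ultimately show ?thesis using c h(2,3) p by (simp add: add_pos_nonneg)
qed

definition qnn :: "sq \<Rightarrow> bool" where
  "qnn q = (case q of (a, b) \<Rightarrow> (nn2 a \<and> nn2 b) \<or> (nn2 (add2 a (mul2 Ypol b)) \<and> nn2 (neg2 b)))"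

definition qpos :: "sq \<Rightarrow> bool" where
  "qpos q = (case q of (a, b) \<Rightarrow> (pos2 a \<and> nn2 b) \<or> (pos2 (add2 a (mul2 Ypol b)) \<and> nn2 (neg2 b)))"

lemma evq_nonneg:
  assumes "qnn q" "0 \<le> e" "0 \<le> d" "0 \<le> u" "u \<le> 4+2*e+d"
  shows "0 \<le> evq q e d u"
proof -
  obtain a b where q: "q = (a,b)" by fastforce
  show ?thesis
  proof (cases "nn2 a \<and> nn2 b")
    case True
    then show ?thesis using assms ev2_nonneg q by simp
  next
    case False
    hence h: "nn2 (add2 a (mul2 Ypol b))" "nn2 (neg2 b)" using assms(1) q by (auto simp: qnn_def)
    have "evq q e d u = ev2 (add2 a (mul2 Ypol b)) e d + ev2 (neg2 b) e d * ((4+2*e+d) - u)"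
      by (simp add: q ev2_add2 ev2_mul2 ev2_neg2 ev2_Ypol algebra_simps)
    then show ?thesis using h assms ev2_nonneg by simp
  qed
qed

lemma evq_pos:
  assumes "qpos q" "0 \<le> e" "0 \<le> d" "0 \<le> u" "u \<le> 4+2*e+d"
  shows "0 < evq q e d u"
proof -
  obtain a b where q: "q = (a,b)" by fastforce
  show ?thesis
  proof (cases "pos2 a \<and> nn2 b")
    case True
    then show ?thesis using assms ev2_nonneg ev2_pos q by (simp add: add_pos_nonneg)
  next
    case False
    hence h: "pos2 (add2 a (mul2 Ypol b))" "nn2 (neg2 b)" using assms(1) q by (auto simp: qpos_def)
    have "evq q e d u = ev2 (add2 a (mul2 Ypol b)) e d + ev2 (neg2 b) e d * ((4+2*e+d) - u)"
      by (simp add: q ev2_add2 ev2_mul2 ev2_neg2 ev2_Ypol algebra_simps)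
    then show ?thesis using h assms ev2_nonneg ev2_pos by (simp add: add_pos_nonneg)
  qed
qed

definition SA :: sm where "SA = (([[1],[1]],[]), ([[1]],[]), ([[],[1]],[]), ([[1]],[]))"
definition SB :: sm where "SB = ((Ypol,[[-1]]), ([],[]), ([[11,7,1],[10,3],[2]],[[],[1]]), ([],[[1]]))"

lemma Am_evm: "Am e = evm SA e d u"
  by (simp add: Am_def SA_def)

lemma Bm_evm: "Bm e d u = evm SB e d u"
  by (simp add: Bm_def SB_def Ypol_def m22_eq_iff power2_eq_square algebra_simps)

definition SX :: sm where "SX = smm SA SB"
definition SY :: sm where "SY = smm SX SB"
definition SY2 :: sm where "SY2 = smm SY SY"
definition SY3 :: sm where "SY3 = smm SY SY2"
definition SY4 :: sm where "SY4 = smm SY SY3"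
definition SF00 :: sm where "SF00 = smm (sms SY2 (smm (smm SX SX) SX)) SA"
definition SF01 :: sm where "SF01 = smm (sms SY3 (smm (smm (smm SX SX) SY) SX)) SA"
definition SF10 :: sm where "SF10 = smm (sms SY3 (smm (smm (smm SX SY) SX) SX)) SA"
definition SF11 :: sm where "SF11 = smm (sms SY4 (smm (smm (smm (smm SX SY) SX) SY) SX)) SA"

fun mpos :: "sm \<Rightarrow> bool" where
  "mpos (a, b, c, g) = (qpos a \<and> qpos b \<and> qpos c \<and> qpos g)"
fun mnn :: "sm \<Rightarrow> bool" where
  "mnn (a, b, c, g) = (qnn a \<and> qnn b \<and> qnn c \<and> qnn g)"

lemma chk00: "mpos SF00"
  by code_simp

lemma chk01: "mnn (sms SF01 SF00)"
  by code_simp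

lemma chk10: "mnn (sms SF10 SF00)"
  by code_simp

lemma chk11: "mnn (sma (sms (sms SF11 SF10) SF01) SF00)"
  by code_simp

lemma mm_sub_r: "(A::real^2^2) ** (B - C) = A ** B - A ** C"
  by (simp add: matrix_matrix_mult_def vec_eq_iff sum_2 algebra_simps)
lemma mm_sub_l: "((A::real^2^2) - B) ** C = A ** C - B ** C"
  by (simp add: matrix_matrix_mult_def vec_eq_iff sum_2 algebra_simps)
lemma mm_scale_r: "(A::real^2^2) ** (c *\<^sub>R B) = c *\<^sub>R (A ** B)"
  by (simp add: matrix_matrix_mult_def vec_eq_iff sum_2 algebra_simps)
lemma mm_scale_l: "(c *\<^sub>R (A::real^2^2)) ** B = c *\<^sub>R (A ** B)"
  by (simp add: matrix_matrix_mult_def vec_eq_iff sum_2 algebra_simps)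

lemma ch2: "(M::real^2^2) ** M = trace M *\<^sub>R M - det M *\<^sub>R mat 1"
proof -
  obtain a b c g where M: "M = m22 a b c g" using m22_eta by blast
  have s: "\<And>r a b c g. r *\<^sub>R m22 a b c g = m22 (r*a) (r*b) (r*c) (r*g)"
    by (simp add: m22_def vec_eq_iff forall_2)
  show ?thesis by (simp add: M m22_mult trace_m22 det_m22 m22_one m22_diff s m22_eq_iff algebra_simps)
qed

lemma wpow_Suc: "wpow u (Suc n) = u @ wpow u n"
  by (simp add: wpow_def)
lemma wpow_add: "wpow u (m + n) = wpow u m @ wpow u n"
  by (simp add: wpow_def replicate_add)

lemma det_phig: "det (A::real^2^2) = 1 \<Longrightarrow> det B = 1 \<Longrightarrow> det (phig A B w) = 1"
  by (induction w) (auto simp: det_mul split: letter.splits)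

definition Yp :: "real^2^2 \<Rightarrow> real^2^2 \<Rightarrow> nat \<Rightarrow> real^2^2" where
  "Yp A B k = phig A B (wpow [La,Lb,Lb] k)"
definition Xm :: "real^2^2 \<Rightarrow> real^2^2 \<Rightarrow> real^2^2" where
  "Xm A B = phig A B [La,Lb]"
definition Nm :: "real^2^2 \<Rightarrow> real^2^2 \<Rightarrow> nat \<Rightarrow> nat \<Rightarrow> real^2^2" where
  "Nm A B k h = Yp A B (k+h+2) - Xm A B ** (Yp A B k ** (Xm A B ** (Yp A B h ** Xm A B)))"
definition Fm :: "real^2^2 \<Rightarrow> real^2^2 \<Rightarrow> nat \<Rightarrow> nat \<Rightarrow> real^2^2" where
  "Fm A B k h = Nm A B k h ** A"

lemma Yp_add: "Yp A B (m + n) = Yp A B m ** Yp A B n"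
  by (simp add: Yp_def wpow_add phig_append)

lemma Yp_0: "Yp A B 0 = mat 1" by (simp add: Yp_def wpow_def)
lemma Yp_Suc: "Yp A B (Suc n) = phig A B [La,Lb,Lb] ** Yp A B n"
  unfolding Yp_def wpow_Suc by (rule phig_append)

lemma Yp_comm: "Yp A B m ** Yp A B n = Yp A B n ** Yp A B m"
  by (metis Yp_add add.commute)

lemma Yp_rec:
  assumes "det A = 1" "det B = 1"
  shows "Yp A B (Suc (Suc n)) = trace (phig A B [La,Lb,Lb]) *\<^sub>R Yp A B (Suc n) - Yp A B n"
proof -
  let ?Y = "phig A B [La,Lb,Lb]"
  have d: "det ?Y = 1" using det_phig assms by blast
  have "Yp A B (Suc (Suc n)) = ?Y ** (?Y ** Yp A B n)" by (simp only: Yp_Suc)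
  also have "\<dots> = (?Y ** ?Y) ** Yp A B n" by (simp only: matrix_mul_assoc)
  also have "\<dots> = (trace ?Y *\<^sub>R ?Y - 1 *\<^sub>R mat 1) ** Yp A B n" by (simp only: ch2[of ?Y] d)
  also have "\<dots> = trace ?Y *\<^sub>R (?Y ** Yp A B n) - Yp A B n"
    by (simp only: mm_sub_l mm_scale_l scaleR_one matrix_mul_lid)
  also have "?Y ** Yp A B n = Yp A B (Suc n)" by (simp only: Yp_Suc)
  finally show ?thesis .
qed

lemma vs_comb: "(t *\<^sub>R a - b) - (t *\<^sub>R c - g) = t *\<^sub>R (a - c) - (b - (g::'a::real_vector))"
  by (simp add: algebra_simps)

lemma Nm_rec_k:
  assumes "det A = 1" "det B = 1"
  shows "Nm A B (Suc (Suc k)) h = trace (phig A B [La,Lb,Lb]) *\<^sub>R Nm A B (Suc k) h - Nm A B k h"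
proof -
  define t where "t = trace (phig A B [La,Lb,Lb])"
  define X where "X = Xm A B"
  define R where "R = X ** (Yp A B h ** X)"
  have r: "\<And>n. Yp A B (Suc (Suc n)) = t *\<^sub>R Yp A B (Suc n) - Yp A B n" using Yp_rec[OF assms] t_def by blast
  have a1: "Suc (Suc k) + h + 2 = Suc (Suc k) + (h + 2)" "Suc k + h + 2 = Suc k + (h + 2)" "k + h + 2 = k + (h+2)" by simp_all
  have 1: "Yp A B (Suc (Suc k) + h + 2) = t *\<^sub>R Yp A B (Suc k + h + 2) - Yp A B (k + h + 2)"
    by (simp only: a1 Yp_add r mm_sub_l mm_scale_l)
  have 2: "X ** (Yp A B (Suc (Suc k)) ** R) = t *\<^sub>R (X ** (Yp A B (Suc k) ** R)) - X ** (Yp A B k ** R)"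
    by (simp only: r mm_sub_l mm_scale_l mm_sub_r mm_scale_r)
  show ?thesis unfolding Nm_def t_def[symmetric] X_def[symmetric] R_def[symmetric] 1 2 by (rule vs_comb)
qed

lemma Nm_rec_h:
  assumes "det A = 1" "det B = 1"
  shows "Nm A B k (Suc (Suc h)) = trace (phig A B [La,Lb,Lb]) *\<^sub>R Nm A B k (Suc h) - Nm A B k h"
proof -
  define t where "t = trace (phig A B [La,Lb,Lb])"
  define X where "X = Xm A B"
  have r: "\<And>n. Yp A B (Suc (Suc n)) = t *\<^sub>R Yp A B (Suc n) - Yp A B n" using Yp_rec[OF assms] t_def by blast
  have a1: "k + Suc (Suc h) + 2 = Suc (Suc h) + (k + 2)" "k + Suc h + 2 = Suc h + (k + 2)" "k + h + 2 = h + (k+2)" by simp_all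
  have 1: "Yp A B (k + Suc (Suc h) + 2) = t *\<^sub>R Yp A B (k + Suc h + 2) - Yp A B (k + h + 2)"
    by (simp only: a1 Yp_add r mm_sub_l mm_scale_l)
  have 2: "X ** (Yp A B k ** (X ** (Yp A B (Suc (Suc h)) ** X))) =
     t *\<^sub>R (X ** (Yp A B k ** (X ** (Yp A B (Suc h) ** X)))) - X ** (Yp A B k ** (X ** (Yp A B h ** X)))"
    by (simp only: r mm_sub_l mm_scale_l mm_sub_r mm_scale_r)
  show ?thesis unfolding Nm_def t_def[symmetric] X_def[symmetric] 1 2 by (rule vs_comb)
qed

lemma seq_mono:
  fixes s :: "nat \<Rightarrow> real"
  assumes t: "2 \<le> t" and r: "\<And>n. s (Suc (Suc n)) = t * s (Suc n) - s n"
    and s0: "0 \<le> s 0" and s1: "s 0 \<le> s 1"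
  shows "s 0 \<le> s n \<and> s n \<le> s (Suc n)"
proof (induction n)
  case 0
  then show ?case using s1 by simp
next
  case (Suc n)
  have a: "s 0 \<le> s (Suc n)" using Suc by linarith
  have "0 \<le> (t - 2) * s (Suc n)" using t a s0 by simp
  moreover have "s (Suc (Suc n)) - s (Suc n) = (t - 2) * s (Suc n) + (s (Suc n) - s n)"
    using r[of n] by (simp add: algebra_simps)
  ultimately have "s (Suc n) \<le> s (Suc (Suc n))" using Suc by linarith
  then show ?case using a by simp
qed

lemma grid_pos:
  fixes f :: "nat \<Rightarrow> nat \<Rightarrow> real"
  assumes t: "2 \<le> t"
    and rk: "\<And>k h. f (Suc (Suc k)) h = t * f (Suc k) h - f k h"
    and rh: "\<And>k h. f k (Suc (Suc h)) = t * f k (Suc h) - f k h"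
    and b00: "0 < f 0 0" and b01: "0 \<le> f 0 1 - f 0 0" and b10: "0 \<le> f 1 0 - f 0 0"
    and b11: "0 \<le> f 1 1 - f 1 0 - f 0 1 + f 0 0"
  shows "0 < f k h"
proof -
  define D where "D h = f 1 h - f 0 h" for h
  have Dr: "D (Suc (Suc n)) = t * D (Suc n) - D n" for n
    unfolding D_def using rh[of 1 n] rh[of 0 n] by (simp add: algebra_simps)
  have D0: "0 \<le> D 0" using b10 by (simp add: D_def)
  have D1: "D 0 \<le> D 1" using b11 by (simp add: D_def)
  have D: "0 \<le> D h"
    using seq_mono[of t D, OF t Dr D0 D1, of h] D0 by linarith
  have Er: "f 0 (Suc (Suc n)) = t * f 0 (Suc n) - f 0 n" for n using rh by blast
  have E: "f 0 0 \<le> f 0 h"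
  proof -
    have e0: "0 \<le> f 0 0" using b00 by simp
    have e1: "f 0 0 \<le> f 0 1" using b01 by simp
    show ?thesis using seq_mono[of t "\<lambda>h. f 0 h", OF t Er e0 e1, of h] by simp
  qed
  have sr: "f (Suc (Suc n)) h = t * f (Suc n) h - f n h" for n using rk by blast
  have s0: "0 \<le> f 0 h" using E b00 by linarith
  have s1: "f 0 h \<le> f 1 h" using D by (simp add: D_def)
  have "f 0 h \<le> f k h"
    using seq_mono[of t "\<lambda>k. f k h", OF t sr s0 s1, of k] by simp
  thus ?thesis using E b00 by simp
qed

lemma mpos_entry:
  assumes "mpos S" "0 \<le> e" "0 \<le> d" "0 \<le> u" "u \<le> 4+2*e+d"
  shows "0 < (evm S e d u)$i$j"
proof -
  obtain a b c g where S: "S = (a,b,c,g)" by (metis prod_cases4)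
  have "qpos a" "qpos b" "qpos c" "qpos g" using assms(1) S by auto
  hence "0 < evq a e d u" "0 < evq b e d u" "0 < evq c e d u" "0 < evq g e d u"
    using evq_pos assms(2-5) by blast+
  then show ?thesis using exhaust_2[of i] exhaust_2[of j] S
    by (auto simp del: evq.simps)
qed

lemma mnn_entry:
  assumes "mnn S" "0 \<le> e" "0 \<le> d" "0 \<le> u" "u \<le> 4+2*e+d"
  shows "0 \<le> (evm S e d u)$i$j"
proof -
  obtain a b c g where S: "S = (a,b,c,g)" by (metis prod_cases4)
  have "qnn a" "qnn b" "qnn c" "qnn g" using assms(1) S by auto
  hence "0 \<le> evq a e d u" "0 \<le> evq b e d u" "0 \<le> evq c e d u" "0 \<le> evq g e d u"
    using evq_nonneg assms(2-5) by blast+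
  then show ?thesis using exhaust_2[of i] exhaust_2[of j] S
    by (auto simp del: evq.simps)
qed

definition SYY :: sm where "SYY = smm SA (smm SB SB)"
fun str :: "sm \<Rightarrow> sq" where "str (a, b, c, g) = qs (qa a g) ([[2]], [])"

lemma chkt: "qnn (str SYY)" by code_simp

lemma trace_evm_str: "trace (evm S e d u) - 2 = evq (str S) e d u"
proof -
  obtain a b c g where S: "S = (a,b,c,g)" by (metis prod_cases4)
  show ?thesis by (simp add: S trace_m22 evq_qs evq_qa del: evq.simps qs.simps qa.simps) simp
qed

lemma Yp_1: "Yp A B 1 = phig A B [La,Lb,Lb]"
  by (simp only: One_nat_def Yp_Suc Yp_0 matrix_mul_rid)
lemma Yp_2: "Yp A B 2 = phig A B [La,Lb,Lb] ** phig A B [La,Lb,Lb]"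
  by (simp only: numeral_2_eq_2 Yp_Suc Yp_0 matrix_mul_rid)
lemma Yp_3: "Yp A B 3 = phig A B [La,Lb,Lb] ** (phig A B [La,Lb,Lb] ** phig A B [La,Lb,Lb])"
  by (simp only: numeral_3_eq_3 Yp_Suc Yp_0 matrix_mul_rid)
lemma Yp_4: "Yp A B 4 = phig A B [La,Lb,Lb] ** (phig A B [La,Lb,Lb] ** (phig A B [La,Lb,Lb] ** phig A B [La,Lb,Lb]))"
proof -
  have "(4::nat) = Suc (Suc (Suc (Suc 0)))" by simp
  then show ?thesis by (simp only: Yp_Suc Yp_0 matrix_mul_rid)
qed

lemma N00: "Nm A B 0 0 = Yp A B 2 - Xm A B ** (Xm A B ** Xm A B)"
proof -
  have "(0::nat) + 0 + 2 = 2" by simp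
  then show ?thesis by (simp only: Nm_def Yp_0 matrix_mul_lid)
qed
lemma N01: "Nm A B 0 1 = Yp A B 3 - Xm A B ** (Xm A B ** (Yp A B 1 ** Xm A B))"
proof -
  have "(0::nat) + 1 + 2 = 3" by simp
  then show ?thesis by (simp only: Nm_def Yp_0 matrix_mul_lid)
qed
lemma N10: "Nm A B 1 0 = Yp A B 3 - Xm A B ** (Yp A B 1 ** (Xm A B ** Xm A B))"
proof -
  have "(1::nat) + 0 + 2 = 3" by simp
  then show ?thesis by (simp only: Nm_def Yp_0 matrix_mul_lid)
qed
lemma N11: "Nm A B 1 1 = Yp A B 4 - Xm A B ** (Yp A B 1 ** (Xm A B ** (Yp A B 1 ** Xm A B)))"
proof -
  have "(1::nat) + 1 + 2 = 4" by simp
  then show ?thesis by (simp only: Nm_def)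
qed

lemma mm_nonneg: "(\<And>i j. 0 \<le> (M::real^2^2)$i$j) \<Longrightarrow> (\<And>i j. 0 \<le> (N::real^2^2)$i$j) \<Longrightarrow> 0 \<le> (M ** N)$i$j"
  by (simp add: matrix_matrix_mult_def sum_nonneg)

lemma phig_nonneg:
  assumes "\<And>i j. 0 \<le> (A::real^2^2)$i$j" "\<And>i j. 0 \<le> (B::real^2^2)$i$j"
  shows "0 \<le> (phig A B w)$i$j"
proof (induction w arbitrary: i j)
  case Nil
  then show ?case by (simp add: mat_def)
next
  case (Cons l w)
  then show ?case using assms by (cases l) (auto intro!: mm_nonneg)
qed

lemma trace_pos:
  fixes Q F :: "real^2^2"
  assumes q: "\<And>i j. 0 \<le> Q$i$j" and dq: "det Q = 1" and f: "\<And>i j. 0 < F$i$j"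
  shows "0 < trace (Q ** F)"
proof -
  obtain a b c g where Q: "Q = m22 a b c g" using m22_eta by blast
  obtain a' b' c' g' where F: "F = m22 a' b' c' g'" using m22_eta by blast
  have nn: "0 \<le> a" "0 \<le> b" "0 \<le> c" "0 \<le> g" using q[of 1 1] q[of 1 2] q[of 2 1] q[of 2 2] Q by auto
  have pp: "0 < a'" "0 < b'" "0 < c'" "0 < g'" using f[of 1 1] f[of 1 2] f[of 2 1] f[of 2 2] F by auto
  have nz: "a \<noteq> 0 \<or> b \<noteq> 0 \<or> c \<noteq> 0 \<or> g \<noteq> 0" using dq Q by (auto simp: det_m22)
  have tr: "trace (Q ** F) = a*a' + b*c' + c*b' + g*g'" by (simp add: Q F m22_mult trace_m22)
  have "0 \<le> a*a'" "0 \<le> b*c'" "0 \<le> c*b'" "0 \<le> g*g'" using nn pp by simp_all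
  moreover have "0 < a*a' \<or> 0 < b*c' \<or> 0 < c*b' \<or> 0 < g*g'" using nz nn pp by auto
  ultimately show ?thesis unfolding tr by linarith
qed

lemma chkA: "mnn SA" by code_simp
lemma chkB: "mnn SB" by code_simp

context
  fixes e d u :: real
  assumes he: "0 \<le> e" and hd: "0 \<le> d" and rel: "u*u = (4+2*e+d)*u - 1"
    and hu: "0 \<le> u" and huy: "u \<le> 4+2*e+d"
begin

lemma detA: "det (Am e) = 1" by (simp add: Am_def det_m22)
lemma detB: "det (Bm e d u) = 1" using rel by (simp add: Bm_def det_m22 algebra_simps)

lemma A_ev: "Am e = evm SA e d u" by (rule Am_evm)
lemma B_ev: "Bm e d u = evm SB e d u" by (rule Bm_evm)

lemma Y_ev: "phig (Am e) (Bm e d u) [La,Lb,Lb] = evm SYY e d u"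
  by (simp add: SYY_def evm_smm[OF rel] A_ev B_ev)

lemma X_ev: "Xm (Am e) (Bm e d u) = evm SX e d u"
  by (simp add: Xm_def SX_def evm_smm[OF rel] A_ev B_ev)

lemma t_ge: "2 \<le> trace (phig (Am e) (Bm e d u) [La,Lb,Lb])"
proof -
  have "0 \<le> evq (str SYY) e d u" using evq_nonneg[OF chkt he hd hu huy] .
  thus ?thesis unfolding Y_ev using trace_evm_str[of SYY e d u] by linarith
qed


lemma F00_ev: "Fm (Am e) (Bm e d u) 0 0 = evm SF00 e d u"
  unfolding Fm_def N00 Yp_2 unfolding Y_ev X_ev unfolding A_ev SYY_def SF00_def SY2_def SY_def SX_def
  by (simp add: evm_smm[OF rel] evm_sms matrix_mul_assoc)
lemma F01_ev: "Fm (Am e) (Bm e d u) 0 1 = evm SF01 e d u"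
  unfolding Fm_def N01 Yp_3 Yp_1 unfolding Y_ev X_ev unfolding A_ev SYY_def SF01_def SY3_def SY2_def SY_def SX_def
  by (simp add: evm_smm[OF rel] evm_sms matrix_mul_assoc)
lemma F10_ev: "Fm (Am e) (Bm e d u) 1 0 = evm SF10 e d u"
  unfolding Fm_def N10 Yp_3 Yp_1 unfolding Y_ev X_ev unfolding A_ev SYY_def SF10_def SY3_def SY2_def SY_def SX_def
  by (simp add: evm_smm[OF rel] evm_sms matrix_mul_assoc)
lemma F11_ev: "Fm (Am e) (Bm e d u) 1 1 = evm SF11 e d u"
  unfolding Fm_def N11 Yp_4 Yp_1 unfolding Y_ev X_ev unfolding A_ev SYY_def SF11_def SY4_def SY3_def SY2_def SY_def SX_def
  by (simp add: evm_smm[OF rel] evm_sms matrix_mul_assoc)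


lemma F_pos: "0 < (Fm (Am e) (Bm e d u) k h)$i$j"
proof -
  define t where "t = trace (phig (Am e) (Bm e d u) [La,Lb,Lb])"
  define f where "f k h = (Fm (Am e) (Bm e d u) k h)$i$j" for k h
  have t2: "2 \<le> t" using t_ge t_def by simp
  have rk: "f (Suc (Suc k)) h = t * f (Suc k) h - f k h" for k h
    unfolding f_def Fm_def Nm_rec_k[OF detA detB] t_def[symmetric] mm_sub_l mm_scale_l by simp
  have rh: "f k (Suc (Suc h)) = t * f k (Suc h) - f k h" for k h
    unfolding f_def Fm_def Nm_rec_h[OF detA detB] t_def[symmetric] mm_sub_l mm_scale_l by simp
  have b00: "0 < f 0 0" unfolding f_def F00_ev using mpos_entry[OF chk00 he hd hu huy] .
  have b01: "0 \<le> f 0 1 - f 0 0"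
    using mnn_entry[OF chk01 he hd hu huy, of i j] unfolding f_def F00_ev F01_ev evm_sms by simp
  have b10: "0 \<le> f 1 0 - f 0 0"
    using mnn_entry[OF chk10 he hd hu huy, of i j] unfolding f_def F00_ev F10_ev evm_sms by simp
  have b11: "0 \<le> f 1 1 - f 1 0 - f 0 1 + f 0 0"
    using mnn_entry[OF chk11 he hd hu huy, of i j] unfolding f_def F00_ev F10_ev F01_ev F11_ev evm_sms evm_sma
    by simp
  show ?thesis using grid_pos[of t f, OF t2 rk rh b00 b01 b10 b11] unfolding f_def .
qed


lemma A_nn: "0 \<le> (Am e)$i$j" unfolding A_ev using mnn_entry[OF chkA he hd hu huy] .
lemma B_nn: "0 \<le> (Bm e d u)$i$j" unfolding B_ev using mnn_entry[OF chkB he hd hu huy] .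

lemma model_ineq:
  "trace (phig (Am e) (Bm e d u) ([La, Lb, Lb] @ w @ [La, Lb] @ wpow [La, Lb, Lb] k @ [La, Lb]
                   @ wpow [La, Lb, Lb] h @ [La, Lb]))
   < trace (phig (Am e) (Bm e d u) ([La, Lb, Lb] @ w @ wpow [La, Lb, Lb] (k + h + 2)))"
proof -
  let ?A = "Am e" and ?B = "Bm e d u"
  let ?X = "Xm ?A ?B"
  define Q where "Q = phig ?A ?B [Lb,Lb] ** phig ?A ?B w"
  have abb: "phig ?A ?B [La,Lb,Lb] = ?A ** phig ?A ?B [Lb,Lb]" by simp
  have L: "phig ?A ?B ([La, Lb, Lb] @ w @ [La, Lb] @ wpow [La, Lb, Lb] k @ [La, Lb] @ wpow [La, Lb, Lb] h @ [La, Lb])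
     = ?A ** Q ** (?X ** (Yp ?A ?B k ** (?X ** (Yp ?A ?B h ** ?X))))"
    unfolding phig_append Xm_def Yp_def abb Q_def by (simp only: matrix_mul_assoc)
  have R: "phig ?A ?B ([La, Lb, Lb] @ w @ wpow [La, Lb, Lb] (k + h + 2)) = ?A ** Q ** Yp ?A ?B (k+h+2)"
    unfolding phig_append Xm_def Yp_def abb Q_def by (simp only: matrix_mul_assoc)
  have "trace (phig ?A ?B ([La, Lb, Lb] @ w @ wpow [La, Lb, Lb] (k + h + 2))) -
        trace (phig ?A ?B ([La, Lb, Lb] @ w @ [La, Lb] @ wpow [La, Lb, Lb] k @ [La, Lb] @ wpow [La, Lb, Lb] h @ [La, Lb]))
      = trace (?A ** Q ** Nm ?A ?B k h)"
    unfolding L R Nm_def mm_sub_r trace_sub ..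
  also have "\<dots> = trace (Q ** Fm ?A ?B k h)"
    unfolding Fm_def by (metis matrix_mul_assoc trace_mul_sym)
  also have "\<dots> > 0"
  proof (rule trace_pos)
    show "\<And>i j. 0 \<le> Q$i$j" unfolding Q_def
      by (intro mm_nonneg phig_nonneg A_nn B_nn)
    show "det Q = 1" unfolding Q_def det_mul by (simp add: det_phig detA detB del: phig.simps)
    show "\<And>i j. 0 < (Fm ?A ?B k h)$i$j" by (rule F_pos)
  qed
  finally show ?thesis by simp
qed

end

lemma trw_trp: "det A = 1 \<Longrightarrow> det B = 1 \<Longrightarrow> trw A B w = trp (trace A) (trace B) (trace (A**B)) w"
  unfolding trw_def phi_phig by (rule trace_phig)

lemma trp_ab3: "trp x y z (wpow [La, Lb] 3) = z^3 - 3*(z::int)"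
  by (simp add: trp_def wpow_def numeral_3_eq_3 power3_eq_cube algebra_simps)

lemma trp_abb2: "trp x y z (wpow [La, Lb, Lb] 2) = (y*z - x)^2 - (2::int)"
  by (simp add: trp_def wpow_def numeral_2_eq_2 power2_eq_square algebra_simps)

lemma trp_bb: "trp x y z [Lb, Lb] = y^2 - (2::int)"
  by (simp add: trp_def power2_eq_square algebra_simps)

theorem lemma7p3:
  fixes A B :: "int^2^2" and w :: "letter list" and k h :: nat
  assumes "A \<in> SL2Z" and "B \<in> SL2Z"
    and "A ** B \<noteq> B ** A"
    and "well_oriented A B"
    and "2 \<le> trace A" and "trace A < trace B"
    and "trace (A ** B) > trace (B ** B)"
    and "trw A B (wpow [La, Lb] 3) \<le> trw A B (wpow [La, Lb, Lb] 2) - 2"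
    and "6 dvd length ([La, Lb, Lb] @ w @ [La, Lb] @ wpow [La, Lb, Lb] k @ [La, Lb]
                        @ wpow [La, Lb, Lb] h @ [La, Lb])"
    and "w = [] \<or> (\<exists>us. set us \<subseteq> {[La, Lb], [La, Lb, Lb]} \<and> w = concat us)"
  shows "trw A B ([La, Lb, Lb] @ w @ [La, Lb] @ wpow [La, Lb, Lb] k @ [La, Lb]
                   @ wpow [La, Lb, Lb] h @ [La, Lb])
         < trw A B ([La, Lb, Lb] @ w @ wpow [La, Lb, Lb] (k + h + 2))"
proof -
  define x where "x = trace A"
  define y where "y = trace B"
  define z where "z = trace (A ** B)"
  have dA: "det A = 1" and dB: "det B = 1" using assms(1,2) by (auto simp: SL2Z_def)
  have T: "\<And>w. trw A B w = trp x y z w" unfolding x_def y_def z_def using trw_trp[OF dA dB] .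
  have bb: "trace (B ** B) = y^2 - 2"
    using T[of "[Lb,Lb]"] unfolding trp_bb trw_def phi_phig by simp
  have facts: "z = y^2 - 1 \<and> 2*x \<le> y"
  proof (rule int_facts)
    show "2 \<le> x" using assms(5) x_def by simp
    show "x < y" using assms(6) x_def y_def by simp
    show "y^2 - 2 < z" using assms(7) bb z_def by simp
    show "z^3 - 3*z \<le> (y*z - x)^2 - 4" using assms(8) unfolding T trp_ab3 trp_abb2 by simp
  qed
  hence zeq: "z = y^2 - 1" and xy: "2*x \<le> y" by auto
  have x2: "2 \<le> x" using assms(5) x_def by simp
  define e :: real where "e = of_int x - 2"
  define d :: real where "d = of_int y - 2 * of_int x"
  have he: "0 \<le> e" using x2 e_def by simp
  have hd: "0 \<le> d" using xy d_def by simp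
  have yr: "of_int y = 4 + 2*e + d" using e_def d_def by simp
  have y4: "4 \<le> (of_int y :: real)" using yr he hd by simp
  define u :: real where "u = (of_int y + sqrt ((of_int y)^2 - 4)) / 2"
  define sr where "sr = sqrt ((of_int y)^2 - 4 :: real)"
  have y16: "16 \<le> (of_int y :: real)^2" using y4 power_mono[of 4 "of_int y :: real" 2] by simp
  have sq: "sr * sr = (of_int y :: real)^2 - 4"
    unfolding sr_def using y16 by (simp add: real_sqrt_mult_self)
  have s0: "0 \<le> sr" unfolding sr_def using y16 by simp
  have sy: "sr \<le> of_int y"
  proof -
    have "sr \<le> sqrt ((of_int y)^2)" unfolding sr_def by (rule real_sqrt_le_mono) simp
    also have "\<dots> = of_int y" using y4 by simp
    finally show ?thesis .
  qed
  have u2: "u = (of_int y + sr) / 2" unfolding u_def sr_def ..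
  have "4*(u*u - (of_int y)*u + 1) = sr * sr - ((of_int y)^2 - 4)"
    unfolding u2 by (simp add: field_simps power2_eq_square)
  hence rel: "u*u = (4+2*e+d)*u - 1" unfolding yr[symmetric] using sq by simp
  have hu: "0 \<le> u" using u2 s0 y4 by simp
  have huy: "u \<le> 4+2*e+d" using u2 sy yr by simp
  have trA: "trace (Am e) = of_int x" by (simp add: Am_def trace_m22 e_def)
  have trB: "trace (Bm e d u) = of_int y" unfolding Bm_def trace_m22 yr by simp
  have trAB1: "trace (Am e ** Bm e d u) = (4+2*e+d)^2 - 1"
    by (simp add: Am_def Bm_def m22_mult trace_m22 algebra_simps)
  have zr: "(of_int z :: real) = (4+2*e+d)^2 - 1" using zeq yr by simp
  have trAB: "trace (Am e ** Bm e d u) = of_int z" using trAB1 zr by simp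
  have dA': "det (Am e) = 1" using detA[OF he hd rel hu huy] .
  have dB': "det (Bm e d u) = 1" using detB[OF he hd rel hu huy] .
  have TR: "\<And>w. real_of_int (trw A B w) = trace (phig (Am e) (Bm e d u) w)"
    unfolding T trace_phig[OF dA' dB'] trA trB trAB trp_of_int ..
  have "real_of_int (trw A B ([La, Lb, Lb] @ w @ [La, Lb] @ wpow [La, Lb, Lb] k @ [La, Lb]
                   @ wpow [La, Lb, Lb] h @ [La, Lb])) <
        real_of_int (trw A B ([La, Lb, Lb] @ w @ wpow [La, Lb, Lb] (k + h + 2)))"
    unfolding TR using model_ineq[OF he hd rel hu huy] .
  then show ?thesis by simp
qed

end
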